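(* Let $H$ be a real or complex Hilbert space of dimension $n$, let $N\ge n$, let $F=\{f_i\}_{i=1}^N$ be a frame for $H$ and let $G=\{g_i\}_{i=1}^N$ be a dual frame of $F$. Let $\{q_i\}_{i=1}^N$ be the weight number sequence defined below. Then $$\mathcal{R}_1^p(F,G)=\max\{\,q_i\,|\langle f_i,g_i\rangle| : 1\le i\le N\,\}.$$
   Context: Inner products are linear in the first argument. A frame for the $n$-dimensional space $H$ is a finite sequence spanning $H$. Its analysis operator is $\Theta_F f=(\langle f,f_i\rangle)_{i=1}^N$ and its synthesis operator is $\Theta_F^*(c)=\sum_i c_if_i$. A dual frame of $F$ is a frame $G=\{g_i\}_{i=1}^N$ with $f=\sum_i\langle f,f_i\rangle g_i=\sum_i\langle f,g_i\rangle f_i$ for all $f\in H$. A probability sequence $\{p_i\}_{i=1}^N$ satisfies $0\le p_i\le 1$ and $\sum_i p_i=1$. The weight numbers are $q_i=\frac{\sum_{j=1}^N p_j}{\sum_{j=1}^N p_j-p_i}\cdot\frac{N-1}{n}$ (assumed well defined). For $1\le m\le N$, $\mathcal{D}_m^p$ is the set of $N\times N$ diagonal matrices $D$ for which there is $\Lambda\subseteq\{1,\dots,N\}$ with $|\Lambda|=m$, $D_{ii}=q_i$ for $i\in\Lambda$ and $D_{ii}=0$ otherwise. Thus $\Theta_G^*D\Theta_F f=\sum_{i\in\Lambda}q_i\langle f,f_i\rangle g_i$. Finally $\mathcal{R}_m^p(F,G)=\max\{\rho(\Theta_G^*D\Theta_F): D\in\mathcal{D}_m^p\}$, where $\rho$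 denotes spectral radius. *)

theory Defs
  imports "Jordan_Normal_Form.Spectral_Radius"
begin

text \<open>Finite-dimensional Hilbert space of dimension n is modelled as the coordinate space
  'a^n (JNF vectors in carrier_vec n) over 'a = real or complex, with the standard inner
  product <x,y> = x \<bullet>c y (linear in the first argument, conjugate-linear in the second).
  Sequences are indexed by i < N (0-based).\<close>

definition synthesis_op :: "nat \<Rightarrow> nat \<Rightarrow> (nat \<Rightarrow> 'a::conjugatable_field vec) \<Rightarrow> 'a mat" where
  "synthesis_op n N f = mat n N (\<lambda>(r, i). f i $ r)"

definition analysis_op :: "nat \<Rightarrow> nat \<Rightarrow> (nat \<Rightarrow> 'a::conjugatable_field vec) \<Rightarrow> 'a mat" where
  "analysis_op n N f = mat N n (\<lambda>(i, r). conjugate (f i $ r))"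

definition is_frame :: "nat \<Rightarrow> nat \<Rightarrow> (nat \<Rightarrow> 'a::conjugatable_field vec) \<Rightarrow> bool" where
  "is_frame n N f \<longleftrightarrow> (\<forall>i<N. f i \<in> carrier_vec n) \<and>
     (\<forall>x \<in> carrier_vec n. \<exists>c \<in> carrier_vec N. x = synthesis_op n N f *\<^sub>v c)"

definition is_dual_frame :: "nat \<Rightarrow> nat \<Rightarrow> (nat \<Rightarrow> 'a::conjugatable_field vec) \<Rightarrow> (nat \<Rightarrow> 'a vec) \<Rightarrow> bool" where
  "is_dual_frame n N f g \<longleftrightarrow> is_frame n N g \<and>
     (\<forall>x \<in> carrier_vec n.
        x = synthesis_op n N g *\<^sub>v (analysis_op n N f *\<^sub>v x) \<and>
        x = synthesis_op n N f *\<^sub>v (analysis_op n N g *\<^sub>v x))"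

definition is_prob_seq :: "nat \<Rightarrow> (nat \<Rightarrow> real) \<Rightarrow> bool" where
  "is_prob_seq N p \<longleftrightarrow> (\<forall>i<N. 0 \<le> p i \<and> p i \<le> 1) \<and> (\<Sum>i<N. p i) = 1"

definition weight_num :: "nat \<Rightarrow> nat \<Rightarrow> (nat \<Rightarrow> real) \<Rightarrow> nat \<Rightarrow> real" where
  "weight_num n N p i = (\<Sum>j<N. p j) / ((\<Sum>j<N. p j) - p i) * ((real N - 1) / real n)"

definition weight_diag :: "nat \<Rightarrow> nat \<Rightarrow> (nat \<Rightarrow> real) \<Rightarrow> nat set \<Rightarrow> 'a::{conjugatable_field, real_algebra_1} mat" where
  "weight_diag n N p \<Lambda> = mat N N (\<lambda>(i, j). if i = j \<and> i \<in> \<Lambda> then of_real (weight_num n N p i) else 0)"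

text \<open>R_m^p(F,G); emb embeds the scalar field into the complex numbers so that the
  spectral radius (over C) can be taken.\<close>
definition R_mp :: "('a::{conjugatable_field, real_algebra_1} \<Rightarrow> complex) \<Rightarrow> nat \<Rightarrow> nat \<Rightarrow> (nat \<Rightarrow> real) \<Rightarrow> nat
     \<Rightarrow> (nat \<Rightarrow> 'a vec) \<Rightarrow> (nat \<Rightarrow> 'a vec) \<Rightarrow> real" where
  "R_mp emb n N p m f g = Max {spectral_radius (map_mat emb
        (synthesis_op n N g * weight_diag n N p \<Lambda> * analysis_op n N f)) | \<Lambda>.
        \<Lambda> \<subseteq> {..<N} \<and> card \<Lambda> = m}"

end

theory Submission
  imports Defs
begin

lemma rank_one_spectral_radius:
  fixes c :: complex and u w :: "nat \<Rightarrow> complex"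
  assumes n: "0 < n"
  shows "spectral_radius (mat n n (\<lambda>(r,s). c * u r * w s)) = norm (c * (\<Sum>s<n. w s * u s))"
proof -
  define M where "M = mat n n (\<lambda>(r,s). c * u r * w s)"
  define t where "t = (\<Sum>s<n. w s * u s)"
  have M: "M \<in> carrier_mat n n" unfolding M_def by simp
  have Mv: "M *\<^sub>v v = (c * (\<Sum>s<n. w s * v $ s)) \<cdot>\<^sub>v vec n u" if "v \<in> carrier_vec n" for v
  proof (rule eq_vecI)
    fix r assume "r < dim_vec ((c * (\<Sum>s<n. w s * v $ s)) \<cdot>\<^sub>v vec n u)"
    hence r: "r < n" by simp
    have "(M *\<^sub>v v) $ r = (\<Sum>s<n. c * u r * w s * v $ s)"
      using r that unfolding M_def by (simp add: scalar_prod_def lessThan_atLeast0)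
    also have "\<dots> = c * (\<Sum>s<n. w s * v $ s) * u r"
      by (simp add: sum_distrib_left sum_distrib_right mult_ac)
    finally show "(M *\<^sub>v v) $ r = ((c * (\<Sum>s<n. w s * v $ s)) \<cdot>\<^sub>v vec n u) $ r"
      using r by simp
  qed (use that M_def in simp)
  have sub: "spectrum M \<subseteq> {0, c * t}"
  proof
    fix l assume "l \<in> spectrum M"
    then obtain v where v: "v \<in> carrier_vec n" "v \<noteq> 0\<^sub>v n" "M *\<^sub>v v = l \<cdot>\<^sub>v v"
      unfolding spectrum_def eigenvalue_def eigenvector_def M_def by auto
    define a where "a = (\<Sum>s<n. w s * v $ s)"
    have eq: "l * v $ r = c * a * u r" if "r < n" for r
    proof -
      have "(M *\<^sub>v v) $ r = (l \<cdot>\<^sub>v v) $ r" using v by simp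
      thus ?thesis using Mv[OF v(1)] that v(1) unfolding a_def by simp
    qed
    show "l \<in> {0, c * t}"
    proof (cases "l = 0")
      case False
      have vr: "v $ r = (c * a / l) * u r" if "r < n" for r
        using eq[OF that] False by (simp add: field_simps)
      have "a = (\<Sum>s<n. w s * v $ s)" by (simp add: a_def)
      also have "\<dots> = (\<Sum>s<n. w s * ((c * a / l) * u s))"
        by (intro sum.cong refl) (simp add: vr)
      also have "\<dots> = (c * a / l) * t" unfolding t_def
        by (simp add: sum_distrib_left mult_ac)
      finally have at: "a = (c * a / l) * t" .
      have "a \<noteq> 0"
      proof
        assume "a = 0"
        hence "v = 0\<^sub>v n" using vr v(1) by (intro eq_vecI) auto
        with v(2) show False by simp
      qed
      with at False have "l = c * t" by (simp add: field_simps)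
      thus ?thesis by simp
    qed simp
  qed
  have fin: "finite (spectrum M)" using card_finite_spectrum[OF M] by simp
  have ne: "spectrum M \<noteq> {}" using spectrum_non_empty[OF M n] .
  show ?thesis
  proof (cases "c * t = 0")
    case True
    with sub ne have "spectrum M = {0}" by auto
    thus ?thesis using True unfolding spectral_radius_def M_def[symmetric] t_def[symmetric] by simp
  next
    case False
    have "c * t \<in> spectrum M"
    proof -
      have "vec n u \<noteq> 0\<^sub>v n"
      proof
        assume "vec n u = 0\<^sub>v n"
        hence "\<forall>s<n. u s = 0" by (metis index_vec index_zero_vec(1))
        hence "t = 0" unfolding t_def by simp
        with False show False by simp
      qed
      moreover have "M *\<^sub>v vec n u = (c * t) \<cdot>\<^sub>v vec n u"
        using Mv[of "vec n u"] unfolding t_def by simp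
      ultimately show ?thesis unfolding spectrum_def eigenvalue_def eigenvector_def M_def
        by (intro CollectI exI[of _ "vec n u"]) auto
    qed
    hence "norm ` spectrum M = {norm (c*t)} \<or> norm ` spectrum M = {0, norm (c*t)}"
      using sub by auto
    hence "Max (norm ` spectrum M) = norm (c * t)" by auto
    thus ?thesis unfolding spectral_radius_def M_def[symmetric] t_def[symmetric] .
  qed
qed

lemma prod_entry:
  fixes f g :: "nat \<Rightarrow> 'a::{conjugatable_field, real_algebra_1} vec"
  assumes i: "i < N" and r: "r < n" and s: "s < n"
  shows "(synthesis_op n N g * weight_diag n N p {i} * analysis_op n N f) $$ (r, s)
     = of_real (weight_num n N p i) * g i $ r * conjugate (f i $ s)"
proof -
  have A: "synthesis_op n N g * weight_diag n N p {i} =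
     mat n N (\<lambda>(r,k). if k = i then g i $ r * of_real (weight_num n N p i) else 0)"
  proof (rule eq_matI)
    fix r k assume rk: "r < dim_row (mat n N (\<lambda>(r,k). if k = i then g i $ r * of_real (weight_num n N p i) else (0::'a)))"
      "k < dim_col (mat n N (\<lambda>(r,k). if k = i then g i $ r * of_real (weight_num n N p i) else (0::'a)))"
    hence rk': "r < n" "k < N" by auto
    have "(synthesis_op n N g * weight_diag n N p {i}) $$ (r, k) =
       (\<Sum>j\<in>{0..<N}. g j $ r * (if j = k \<and> j = i then of_real (weight_num n N p j) else 0))"
      using rk' by (simp add: synthesis_op_def weight_diag_def scalar_prod_def)
    also have "\<dots> = (\<Sum>j\<in>{0..<N}. if j = k \<and> j = i then g i $ r * of_real (weight_num n N p i) else 0)"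
      by (intro sum.cong refl) auto
    also have "\<dots> = (if k = i then g i $ r * of_real (weight_num n N p i) else 0)"
      using rk' by (simp add: sum.delta' conj_commute)
    finally show "(synthesis_op n N g * weight_diag n N p {i}) $$ (r, k) =
       mat n N (\<lambda>(r,k). if k = i then g i $ r * of_real (weight_num n N p i) else 0) $$ (r, k)"
      using rk' by simp
  qed (auto simp: synthesis_op_def weight_diag_def)
  have "(synthesis_op n N g * weight_diag n N p {i} * analysis_op n N f) $$ (r, s)
     = (\<Sum>k\<in>{0..<N}. (if k = i then g i $ r * of_real (weight_num n N p i) else 0) * conjugate (f k $ s))"
    unfolding A using r s by (simp add: analysis_op_def scalar_prod_def)
  also have "\<dots> = (\<Sum>k\<in>{0..<N}. if k = i then g i $ r * of_real (weight_num n N p i) * conjugate (f i $ s) else 0)"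
    by (intro sum.cong refl) auto
  also have "\<dots> = g i $ r * of_real (weight_num n N p i) * conjugate (f i $ s)"
    using i by (simp add: sum.delta)
  finally show ?thesis by (simp add: mult_ac)
qed

lemma single_sr:
  fixes f g :: "nat \<Rightarrow> 'a::{conjugatable_field, real_algebra_1} vec" and emb :: "'a \<Rightarrow> complex"
  assumes em: "\<And>a b. emb (a * b) = emb a * emb b" and er: "\<And>x. emb (of_real x) = of_real x"
    and n: "0 < n" and i: "i < N"
  shows "spectral_radius (map_mat emb (synthesis_op n N g * weight_diag n N p {i} * analysis_op n N f))
    = norm (of_real (weight_num n N p i) * (\<Sum>s<n. emb (conjugate (f i $ s)) * emb (g i $ s)))"
proof -
  have "map_mat emb (synthesis_op n N g * weight_diag n N p {i} * analysis_op n N f)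
    = mat n n (\<lambda>(r,s). of_real (weight_num n N p i) * emb (g i $ r) * emb (conjugate (f i $ s)))"
  proof -
    have d: "dim_row (synthesis_op n N g * weight_diag n N p {i} * analysis_op n N f) = n"
      "dim_col (synthesis_op n N g * weight_diag n N p {i} * analysis_op n N f) = n"
      by (simp_all add: synthesis_op_def analysis_op_def)
    show ?thesis
    proof (rule eq_matI)
      fix r s assume "r < dim_row (mat n n (\<lambda>(r,s). of_real (weight_num n N p i) * emb (g i $ r) * emb (conjugate (f i $ s))))"
        "s < dim_col (mat n n (\<lambda>(r,s). of_real (weight_num n N p i) * emb (g i $ r) * emb (conjugate (f i $ s))))"
      hence rs: "r < n" "s < n" by auto
      show "map_mat emb (synthesis_op n N g * weight_diag n N p {i} * analysis_op n N f) $$ (r, s) =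
         mat n n (\<lambda>(r,s). of_real (weight_num n N p i) * emb (g i $ r) * emb (conjugate (f i $ s))) $$ (r, s)"
        using rs by (simp only: index_map_mat d prod_entry[OF i rs] em er index_mat) simp
    qed (simp_all add: synthesis_op_def analysis_op_def)
  qed
  thus ?thesis using rank_one_spectral_radius[OF n, of "of_real (weight_num n N p i)"
      "\<lambda>r. emb (g i $ r)" "\<lambda>s. emb (conjugate (f i $ s))"] by simp
qed

lemma R_eq:
  fixes f g :: "nat \<Rightarrow> 'a::{conjugatable_field, real_algebra_1} vec" and emb :: "'a \<Rightarrow> complex"
  assumes em: "\<And>a b. emb (a * b) = emb a * emb b" and er: "\<And>x. emb (of_real x) = of_real x"
    and n: "0 < n"
  shows "R_mp emb n N p 1 f g = Max {norm (of_real (weight_num n N p i) * (\<Sum>s<n. emb (conjugate (f i $ s)) * emb (g i $ s))) | i. i < N}"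
proof -
  have "{spectral_radius (map_mat emb
        (synthesis_op n N g * weight_diag n N p \<Lambda> * analysis_op n N f)) | \<Lambda>.
        \<Lambda> \<subseteq> {..<N} \<and> card \<Lambda> = 1} = {norm (of_real (weight_num n N p i) * (\<Sum>s<n. emb (conjugate (f i $ s)) * emb (g i $ s))) | i. i < N}"
  proof safe
    fix L :: "nat set" assume "L \<subseteq> {..<N}" "card L = 1"
    then obtain i where "L = {i}" "i < N" by (auto simp: card_1_singleton_iff)
    thus "\<exists>i. spectral_radius (map_mat emb (synthesis_op n N g * weight_diag n N p L * analysis_op n N f)) =
      norm (of_real (weight_num n N p i) * (\<Sum>s<n. emb (conjugate (f i $ s)) * emb (g i $ s))) \<and> i < N"
      using single_sr[OF em er n] by blast
  next
    fix i assume "i < N"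
    thus "\<exists>L. norm (of_real (weight_num n N p i) * (\<Sum>s<n. emb (conjugate (f i $ s)) * emb (g i $ s))) =
      spectral_radius (map_mat emb (synthesis_op n N g * weight_diag n N p L * analysis_op n N f)) \<and>
           L \<subseteq> {..<N} \<and> card L = 1"
      using single_sr[OF em er n, of i N g p f] by (intro exI[of _ "{i}"]) auto
  qed
  thus ?thesis unfolding R_mp_def by simp
qed

lemma q_nonneg:
  assumes "0 < n" "n \<le> N" "is_prob_seq N p" "\<forall>i<N. (\<Sum>j<N. p j) - p i \<noteq> 0" "i < N"
  shows "0 \<le> weight_num n N p i"
proof -
  have S: "(\<Sum>j<N. p j) = 1" "p i \<le> 1" using assms(3,5) unfolding is_prob_seq_def by auto
  have "1 - p i > 0" using S assms(4,5) by force
  moreover have "real N - 1 \<ge> 0" using assms(1,2) by simp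
  ultimately show ?thesis unfolding weight_num_def S(1) using assms(1) by simp
qed

lemma real_case:
  fixes f g :: "nat \<Rightarrow> real vec"
  assumes "0 \<le> q" "f i \<in> carrier_vec n" "g i \<in> carrier_vec n"
  shows "norm (of_real q * (\<Sum>s<n. complex_of_real (conjugate (f i $ s)) * complex_of_real (g i $ s)))
     = q * norm (f i \<bullet>c g i)"
proof -
  have "(\<Sum>s<n. complex_of_real (conjugate (f i $ s)) * complex_of_real (g i $ s))
      = complex_of_real (f i \<bullet>c g i)"
    using assms(3) by (simp add: scalar_prod_def lessThan_atLeast0 mult.commute)
  thus ?thesis using assms(1) by (simp add: norm_mult)
qed

lemma complex_case:
  fixes f g :: "nat \<Rightarrow> complex vec"
  assumes "0 \<le> q" "f i \<in> carrier_vec n" "g i \<in> carrier_vec n"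
  shows "norm (of_real q * (\<Sum>s<n. conjugate (f i $ s) * g i $ s))
     = q * norm (f i \<bullet>c g i)"
proof -
  have "(\<Sum>s<n. conjugate (f i $ s) * g i $ s) = cnj (f i \<bullet>c g i)"
    using assms(3) by (simp add: scalar_prod_def lessThan_atLeast0 mult.commute)
  thus ?thesis using assms(1) by (simp add: norm_mult)
qed

theorem proposition3p1:
  fixes n N :: nat and p :: "nat \<Rightarrow> real"
  assumes "0 < n" and "n \<le> N"
    and "is_prob_seq N p"
    and "\<forall>i<N. (\<Sum>j<N. p j) - p i \<noteq> 0"
  shows "(\<forall>(f :: nat \<Rightarrow> real vec) g. is_frame n N f \<longrightarrow> is_dual_frame n N f g \<longrightarrow>
            R_mp complex_of_real n N p 1 f g
              = Max {weight_num n N p i * norm (f i \<bullet>c g i) | i. i < N})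
       \<and> (\<forall>(f :: nat \<Rightarrow> complex vec) g. is_frame n N f \<longrightarrow> is_dual_frame n N f g \<longrightarrow>
            R_mp (\<lambda>z. z) n N p 1 f g
              = Max {weight_num n N p i * norm (f i \<bullet>c g i) | i. i < N})"
proof safe
  fix f g :: "nat \<Rightarrow> real vec"
  assume F: "is_frame n N f" and G: "is_dual_frame n N f g"
  have c: "\<And>i. i < N \<Longrightarrow> f i \<in> carrier_vec n \<and> g i \<in> carrier_vec n"
    using F G unfolding is_dual_frame_def is_frame_def by auto
  have "R_mp complex_of_real n N p 1 f g = Max {norm (of_real (weight_num n N p i) * (\<Sum>s<n. complex_of_real (conjugate (f i $ s)) * complex_of_real (g i $ s))) | i. i < N}"
    by (rule R_eq) (simp_all add: assms(1))
  also have "{norm (of_real (weight_num n N p i) * (\<Sum>s<n. complex_of_real (conjugate (f i $ s)) * complex_of_real (g i $ s))) | i. i < N}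
     = {weight_num n N p i * norm (f i \<bullet>c g i) | i. i < N}"
    using real_case[OF q_nonneg[OF assms]] c by (intro Collect_cong ex_cong1) auto
  finally show "R_mp complex_of_real n N p 1 f g = Max {weight_num n N p i * norm (f i \<bullet>c g i) | i. i < N}" .
next
  fix f g :: "nat \<Rightarrow> complex vec"
  assume F: "is_frame n N f" and G: "is_dual_frame n N f g"
  have c: "\<And>i. i < N \<Longrightarrow> f i \<in> carrier_vec n \<and> g i \<in> carrier_vec n"
    using F G unfolding is_dual_frame_def is_frame_def by auto
  have "R_mp (\<lambda>z. z) n N p 1 f g = Max {norm (of_real (weight_num n N p i) * (\<Sum>s<n. conjugate (f i $ s) * g i $ s)) | i. i < N}"
    by (rule R_eq) (simp_all add: assms(1))
  also have "{norm (of_real (weight_num n N p i) * (\<Sum>s<n. conjugate (f i $ s) * g i $ s)) | i. i < N}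
     = {weight_num n N p i * norm (f i \<bullet>c g i) | i. i < N}"
    using complex_case[OF q_nonneg[OF assms]] c by (intro Collect_cong ex_cong1) auto
  finally show "R_mp (\<lambda>z. z) n N p 1 f g = Max {weight_num n N p i * norm (f i \<bullet>c g i) | i. i < N}" .
qed

end
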